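(* Let $\mathcal H$ be a separable complex Hilbert space, $\mathcal L_0$ a complete reflexive subspace lattice on $\mathcal H$, $n_0\ge2$ an integer, and $\mathcal L_{n_0}$ the subspace lattice on $\mathcal K_{n_0}$ defined in the context. Then: (1) $(E_{11}\otimes P)_-=(E_{11}\otimes P_-^{\mathcal L_0})\vee Q_\zeta$ for all $P\in\mathcal L_0$; (2) $(F_k)_-=F_{k-1}\vee Q_\zeta$ for $1<k<n_0$; (3) $(Q_\zeta)_-=F_{n_0-1}$; (4) $I_-=I$ and $0_+=0$, where predecessors and successors without superscript are computed in $\mathcal L_{n_0}$.
   Context: A subspace lattice is a family of closed subspaces containing $\{0\}$ and the whole space, closed under arbitrary closed linear spans ($\vee$) and intersections ($\wedge$); subspaces are identified with orthogonal projections, ordered by range inclusion. $\operatorname{Alg}\mathcal L=\{A:AE\subset E\ \forall E\in\mathcal L\}$; $\mathcal L$ is reflexive if it equals the lattice of closed subspaces invariant under all of $\operatorname{Alg}\mathcal L$. For $P\in\mathcal L$: $P_-=\vee\{Q\in\mathcal L:Q\not\ge P\}$ for $P\ne0$, $0_-=0$; $P_+=\wedge\{Q\in\mathcal L: Q\not\le P\}$ for $P\ne I$, $I_+=I$. $P_-^{\mathcal L_0}$ denotes the predecessor of $P$ in $\mathcal L_0$. $\mathcal K_{n_0}=\mathcal H^{(n_0)}$ (direct sum of $n_0$ copies of $\mathcal H$); $\zeta=(a_1,\dots,a_{n_0})\in\mathbb C^{n_0}$ a unit vector with all $a_i\ne0$; $Q_\zeta$ the orthogonal projection onto $\{(a_1x,\dots,a_{n_0}x):x\in\mathcal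 H\}$; $E_{ij}$ the matrix units of $M_{n_0}(\mathbb C)$; $F_k=\sum_{j=1}^kE_{jj}\otimes I$; $\mathcal L_{n_0}$ is the subspace lattice generated by $\{E_{11}\otimes P,Q_\zeta,F_k:P\in\mathcal L_0,2\le k\le n_0\}$. *)

theory Defs
  imports "HOL-Analysis.Analysis" "HOL-Library.Function_Algebras"
begin

text \<open>HOL-Analysis only provides real inner product spaces, so we introduce
complex inner product spaces (norm induced by the complex inner product,
conjugate-linear in the first argument) and complex Hilbert spaces
(complete ones).\<close>

class complex_inner_space = real_normed_vector +
  fixes scaleC :: "complex \<Rightarrow> 'a \<Rightarrow> 'a"
    and cinner :: "'a \<Rightarrow> 'a \<Rightarrow> complex"
  assumes scaleC_add_right: "scaleC c (x + y) = scaleC c x + scaleC c y"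
    and scaleC_add_left: "scaleC (c + d) x = scaleC c x + scaleC d x"
    and scaleC_scaleC: "scaleC c (scaleC d x) = scaleC (c * d) x"
    and scaleC_one: "scaleC 1 x = x"
    and scaleR_scaleC: "scaleR r x = scaleC (complex_of_real r) x"
    and cinner_commute: "cinner x y = cnj (cinner y x)"
    and cinner_add_left: "cinner (x + y) z = cinner x z + cinner y z"
    and cinner_scaleC_left: "cinner (scaleC c x) y = cnj c * cinner x y"
    and cinner_self_nonneg: "0 \<le> Re (cinner x x)"
    and norm_eq_sqrt_cinner: "norm x = sqrt (Re (cinner x x))"

class chilbert_space = complex_inner_space + complete_space

text \<open>Subspaces are represented by their ranges (sets), ordered by inclusion.\<close>

definition lat_join :: "('v set \<Rightarrow> bool) \<Rightarrow> 'v set set \<Rightarrow> 'v set" where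
  "lat_join csub \<S> = \<Inter> {T. csub T \<and> \<Union>\<S> \<subseteq> T}"
  \<comment> \<open>closed linear span: the smallest closed subspace containing all members\<close>

definition lat_meet :: "'v set \<Rightarrow> 'v set set \<Rightarrow> 'v set" where
  "lat_meet Top \<S> = Top \<inter> \<Inter>\<S>"

definition subspace_lattice :: "('v::zero set \<Rightarrow> bool) \<Rightarrow> 'v set \<Rightarrow> 'v set set \<Rightarrow> bool" where
  "subspace_lattice csub Top \<L> \<longleftrightarrow>
     (\<forall>E\<in>\<L>. csub E) \<and> {0} \<in> \<L> \<and> Top \<in> \<L> \<and>
     (\<forall>\<S>. \<S> \<subseteq> \<L> \<longrightarrow> lat_join csub \<S> \<in> \<L> \<and> lat_meet Top \<S> \<in> \<L>)"

definition generated_lattice :: "('v::zero set \<Rightarrow> bool) \<Rightarrow> 'v set \<Rightarrow> 'v set set \<Rightarrow> 'v set set" where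
  "generated_lattice csub Top G = \<Inter> {\<L>. subspace_lattice csub Top \<L> \<and> G \<subseteq> \<L>}"

text \<open>Predecessor \<open>P_-\<close> and successor \<open>P_+\<close> in a lattice \<open>\<L>\<close>.
\<open>Q \<not>\<ge> P\<close> means \<open>\<not> P \<subseteq> Q\<close>.\<close>

definition lat_pred :: "('v::zero set \<Rightarrow> bool) \<Rightarrow> 'v set set \<Rightarrow> 'v set \<Rightarrow> 'v set" where
  "lat_pred csub \<L> P = (if P = {0} then {0} else lat_join csub {Q \<in> \<L>. \<not> P \<subseteq> Q})"

definition lat_succ :: "'v set \<Rightarrow> 'v set set \<Rightarrow> 'v set \<Rightarrow> 'v set" where
  "lat_succ Top \<L> P = (if P = Top then Top else lat_meet Top {Q \<in> \<L>. \<not> Q \<subseteq> P})"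

definition csubspace :: "'a::complex_inner_space set \<Rightarrow> bool" where
  "csubspace S \<longleftrightarrow> 0 \<in> S \<and> (\<forall>x\<in>S. \<forall>y\<in>S. x + y \<in> S) \<and> (\<forall>c. \<forall>x\<in>S. scaleC c x \<in> S)"

definition closed_csubspace :: "'a::complex_inner_space set \<Rightarrow> bool" where
  "closed_csubspace S \<longleftrightarrow> csubspace S \<and> closed S"

definition bounded_clinear_op :: "('a::complex_inner_space \<Rightarrow> 'a) \<Rightarrow> bool" where
  "bounded_clinear_op A \<longleftrightarrow>
     (\<forall>x y. A (x + y) = A x + A y) \<and> (\<forall>c x. A (scaleC c x) = scaleC c (A x)) \<and>
     (\<exists>K. \<forall>x. norm (A x) \<le> K * norm x)"

definition Alg :: "'a::complex_inner_space set set \<Rightarrow> ('a \<Rightarrow> 'a) set" where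
  "Alg \<L> = {A. bounded_clinear_op A \<and> (\<forall>E\<in>\<L>. A ` E \<subseteq> E)}"

definition Lat :: "('a::complex_inner_space \<Rightarrow> 'a) set \<Rightarrow> 'a set set" where
  "Lat \<A> = {E. closed_csubspace E \<and> (\<forall>A\<in>\<A>. A ` E \<subseteq> E)}"

definition reflexive_lattice :: "'a::complex_inner_space set set \<Rightarrow> bool" where
  "reflexive_lattice \<L> \<longleftrightarrow> \<L> = Lat (Alg \<L>)"

definition separable_space :: "'a::topological_space itself \<Rightarrow> bool" where
  "separable_space _ \<longleftrightarrow> (\<exists>D::'a set. countable D \<and> closure D = UNIV)"

text \<open>Elements of \<open>\<H>^{(n)}\<close> are represented as functions \<open>nat \<Rightarrow> 'a\<close> vanishing
at indices \<open>\<ge> n\<close>; coordinate \<open>i\<close> (0-based) is the \<open>(i+1)\<close>-st summand.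
Since only finitely many coordinates are nonzero, the product topology on
\<open>nat \<Rightarrow> 'a\<close> restricted to this space coincides with the Hilbert norm topology.\<close>

definition Kspace :: "nat \<Rightarrow> (nat \<Rightarrow> 'a::complex_inner_space) set" where
  "Kspace n = {x. \<forall>i\<ge>n. x i = 0}"

definition Ksub :: "nat \<Rightarrow> (nat \<Rightarrow> 'a::complex_inner_space) set \<Rightarrow> bool" where
  "Ksub n S \<longleftrightarrow> S \<subseteq> Kspace n \<and> 0 \<in> S \<and>
     (\<forall>x\<in>S. \<forall>y\<in>S. (\<lambda>i. x i + y i) \<in> S) \<and> (\<forall>c. \<forall>x\<in>S. (\<lambda>i. scaleC c (x i)) \<in> S) \<and>
     closed S"

text \<open>\<open>E_{11} \<otimes> P\<close>: range \<open>{(x,0,\<dots>,0) : x \<in> P}\<close>.\<close>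
definition E11_tensor :: "'a::complex_inner_space set \<Rightarrow> (nat \<Rightarrow> 'a) set" where
  "E11_tensor P = {x. x 0 \<in> P \<and> (\<forall>i. i \<noteq> 0 \<longrightarrow> x i = 0)}"

text \<open>\<open>F_k = \<Sum>_{j=1}^k E_{jj} \<otimes> I\<close>: range = vectors supported in the first \<open>k\<close> coordinates.\<close>
definition Fk :: "nat \<Rightarrow> (nat \<Rightarrow> 'a::complex_inner_space) set" where
  "Fk k = {x. \<forall>i\<ge>k. x i = 0}"

text \<open>\<open>Q_\<zeta>\<close>: range \<open>{(a_1 x,\<dots>,a_{n} x) : x \<in> \<H>}\<close>.\<close>
definition Qzeta :: "nat \<Rightarrow> (nat \<Rightarrow> complex) \<Rightarrow> (nat \<Rightarrow> 'a::complex_inner_space) set" where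
  "Qzeta n a = {x. \<exists>h. \<forall>i. x i = (if i < n then scaleC (a i) h else 0)}"

definition L_n0 :: "nat \<Rightarrow> (nat \<Rightarrow> complex) \<Rightarrow> 'a::complex_inner_space set set
                     \<Rightarrow> (nat \<Rightarrow> 'a) set set" where
  "L_n0 n a \<L>0 = generated_lattice (Ksub n) (Kspace n)
      ({E11_tensor P | P. P \<in> \<L>0} \<union> {Qzeta n a} \<union> {Fk k | k. 2 \<le> k \<and> k \<le> n})"

end

theory Submission
  imports Defs
begin


lemma cinner_scaleC_right: "cinner x (scaleC c y) = c * cinner x (y::'a::complex_inner_space)"
  by (metis cinner_commute cinner_scaleC_left complex_cnj_cnj complex_cnj_mult)

lemma norm_scaleC: "norm (scaleC c (x::'a::complex_inner_space)) = cmod c * norm x"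
proof -
  have "cinner (scaleC c x) (scaleC c x) = (cnj c * c) * cinner x x"
    by (simp add: cinner_scaleC_left cinner_scaleC_right)
  also have "cnj c * c = complex_of_real ((cmod c)^2)"
    using complex_norm_square[of c] by (simp add: mult.commute)
  finally have "Re (cinner (scaleC c x) (scaleC c x)) = (cmod c)^2 * Re (cinner x x)"
    by simp
  thus ?thesis
    by (simp add: norm_eq_sqrt_cinner real_sqrt_mult)
qed

lemma bl_scaleC: "bounded_linear (scaleC c :: 'a::complex_inner_space \<Rightarrow> 'a)"
proof (rule bounded_linear_intro[where K="cmod c"])
  show "scaleC c (x + y) = scaleC c x + scaleC c (y::'a)" for x y by (rule scaleC_add_right)
  show "scaleC c (scaleR r x) = scaleR r (scaleC c (x::'a))" for r x
    by (simp add: scaleR_scaleC scaleC_scaleC mult.commute)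
  show "norm (scaleC c x) \<le> norm (x::'a) * cmod c" for x
    by (simp add: norm_scaleC mult.commute)
qed

lemma scaleC_zero[simp]: "scaleC c (0::'a::complex_inner_space) = 0"
  using linear_0[OF bounded_linear.linear[OF bl_scaleC]] .

lemma cont_scaleC: "continuous_on UNIV (scaleC c :: 'a::complex_inner_space \<Rightarrow> 'a)"
  using bl_scaleC linear_continuous_on by blast

lemma scaleC_eq0: "scaleC c (h::'a::complex_inner_space) = 0 \<Longrightarrow> c \<noteq> 0 \<Longrightarrow> h = 0"
  by (metis norm_scaleC mult_eq_0_iff norm_eq_zero)

lemma Ksub_Inter:
  assumes "F \<noteq> {}" "\<forall>T\<in>F. Ksub n T" shows "Ksub n (\<Inter>F)"
proof -
  obtain T0 where T0: "T0 \<in> F" using assms(1) by auto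
  have "\<Inter>F \<subseteq> T0" using T0 by auto
  also have "T0 \<subseteq> Kspace n" using T0 assms(2) unfolding Ksub_def by auto
  finally have "\<Inter>F \<subseteq> Kspace n" .
  moreover have "closed (\<Inter>F)" using assms(2) unfolding Ksub_def by (intro closed_Inter) auto
  ultimately show ?thesis using assms(2) unfolding Ksub_def by simp
qed

lemma Ksub_Kspace: "Ksub n (Kspace n :: (nat \<Rightarrow> 'a::complex_inner_space) set)"
proof -
  have "Kspace n = (\<Inter>i\<in>{i. i\<ge>n}. (\<lambda>x::nat\<Rightarrow>'a. x i) -` {0})"
    unfolding Kspace_def by auto
  moreover have "closed \<dots>"
    by (intro closed_INT ballI closed_vimage) auto
  ultimately show ?thesis unfolding Ksub_def Kspace_def by auto
qed

lemma Ksub_zero: "Ksub n ({0} :: (nat \<Rightarrow> 'a::complex_inner_space) set)"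
  unfolding Ksub_def Kspace_def by (auto simp: zero_fun_def)

lemma lat_join_least: "Ksub n T \<Longrightarrow> \<Union>S \<subseteq> T \<Longrightarrow> lat_join (Ksub n) S \<subseteq> T"
  unfolding lat_join_def by auto

lemma lat_join_upper: "Q \<in> S \<Longrightarrow> Q \<subseteq> lat_join csub S"
  unfolding lat_join_def by auto

lemma lat_join_Ksub:
  assumes "\<Union>S \<subseteq> Kspace n"
  shows "Ksub n (lat_join (Ksub n) (S :: (nat \<Rightarrow> 'a::complex_inner_space) set set))"
  unfolding lat_join_def
  by (rule Ksub_Inter) (use assms Ksub_Kspace[of n] in auto)

lemma Ksub_sub: "Ksub n T \<Longrightarrow> T \<subseteq> Kspace n"
  unfolding Ksub_def by auto

lemma gen_dich:
  fixes G :: "(nat \<Rightarrow> 'a::complex_inner_space) set set"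
  assumes B: "Ksub n B" and A: "A \<subseteq> Kspace n"
    and G: "\<forall>g\<in>G. Ksub n g \<and> (A \<subseteq> g \<or> g \<subseteq> B)"
    and Q: "Q \<in> generated_lattice (Ksub n) (Kspace n) G"
  shows "Ksub n Q \<and> (A \<subseteq> Q \<or> Q \<subseteq> B)"
proof -
  let ?L = "{Q. Ksub n Q \<and> (A \<subseteq> Q \<or> Q \<subseteq> B)}"
  have "subspace_lattice (Ksub n) (Kspace n) ?L"
    unfolding subspace_lattice_def
  proof (intro conjI allI impI)
    show "\<forall>E\<in>?L. Ksub n E" by auto
    have "0 \<in> B" using B unfolding Ksub_def by auto
    then show "{0} \<in> ?L" using Ksub_zero by auto
    show "Kspace n \<in> ?L" using Ksub_Kspace A by auto
  next
    fix S assume S: "S \<subseteq> ?L"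
    have U: "\<Union>S \<subseteq> Kspace n" using S Ksub_sub by blast
    show "lat_join (Ksub n) S \<in> ?L"
    proof (cases "\<exists>Q\<in>S. A \<subseteq> Q")
      case True
      then show ?thesis using lat_join_Ksub[OF U] lat_join_upper by blast
    next
      case False
      then have "\<Union>S \<subseteq> B" using S by auto
      then show ?thesis using lat_join_Ksub[OF U] lat_join_least[OF B] by blast
    qed
    have K: "Ksub n (Kspace n \<inter> \<Inter>S)"
      using Ksub_Inter[of "insert (Kspace n) S" n] S Ksub_Kspace by auto
    show "lat_meet (Kspace n) S \<in> ?L"
    proof (cases "\<forall>Q\<in>S. A \<subseteq> Q")
      case True
      then show ?thesis using K A unfolding lat_meet_def by auto
    next
      case False
      then obtain Q where "Q \<in> S" "Q \<subseteq> B" using S by auto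
      then show ?thesis using K unfolding lat_meet_def by auto
    qed
  qed
  moreover have "G \<subseteq> ?L" using G by auto
  ultimately show ?thesis using Q unfolding generated_lattice_def by blast
qed

lemma gen_in: "g \<in> G \<Longrightarrow> g \<in> generated_lattice csub Top G"
  unfolding generated_lattice_def by auto

lemma Fk_Kspace: "Fk k = Kspace k"
  unfolding Fk_def Kspace_def by simp

lemma Ksub_Fk: "k \<le> n \<Longrightarrow> Ksub n (Fk k :: (nat \<Rightarrow> 'a::complex_inner_space) set)"
  using Ksub_Kspace[of k] unfolding Fk_Kspace Ksub_def Kspace_def by auto

lemma Ksub_E11:
  assumes P: "closed_csubspace P" and n: "1 \<le> n"
  shows "Ksub n (E11_tensor P)"
proof -
  have "E11_tensor P = (\<lambda>x. x 0) -` P \<inter> (\<Inter>i\<in>{i. i \<noteq> 0}. (\<lambda>x. x i) -` {0})"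
    unfolding E11_tensor_def by auto
  moreover have "closed \<dots>"
    using P unfolding closed_csubspace_def
    by (intro closed_Int closed_INT ballI closed_vimage) auto
  moreover have "E11_tensor P \<subseteq> Kspace n" using n unfolding E11_tensor_def Kspace_def by auto
  moreover have "0 \<in> E11_tensor P" using P unfolding E11_tensor_def closed_csubspace_def csubspace_def by auto
  moreover have "(\<lambda>i. x i + y i) \<in> E11_tensor P" if "x \<in> E11_tensor P" "y \<in> E11_tensor P" for x y
    using P that unfolding E11_tensor_def closed_csubspace_def csubspace_def by simp
  moreover have "(\<lambda>i. scaleC c (x i)) \<in> E11_tensor P" if "x \<in> E11_tensor P" for c x
    using P that unfolding E11_tensor_def closed_csubspace_def csubspace_def by simp
  ultimately show ?thesis unfolding Ksub_def by metis
qed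

lemma Q_alt:
  assumes "0 < n" "a 0 \<noteq> 0"
  shows "Qzeta n a = {x. \<forall>i. x i = (if i < n then scaleC (a i) (scaleC (inverse (a 0)) (x 0)) else (0::'a::complex_inner_space))}"
proof safe
  fix x :: "nat \<Rightarrow> 'a" and i assume "x \<in> Qzeta n a"
  then obtain h where h: "\<And>i. x i = (if i < n then scaleC (a i) h else 0)" unfolding Qzeta_def by auto
  have "scaleC (inverse (a 0)) (x 0) = h" using h[of 0] assms by (simp add: scaleC_scaleC scaleC_one)
  then show "x i = (if i < n then scaleC (a i) (scaleC (inverse (a 0)) (x 0)) else 0)"
    by (subst \<open>scaleC (inverse (a 0)) (x 0) = h\<close>) (rule h)
next
  fix x :: "nat \<Rightarrow> 'a" assume "\<forall>i. x i = (if i < n then scaleC (a i) (scaleC (inverse (a 0)) (x 0)) else 0)"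
  then show "x \<in> Qzeta n a" unfolding Qzeta_def by blast
qed

lemma closed_Q:
  assumes n: "0 < n" and a0: "a 0 \<noteq> 0"
  shows "closed (Qzeta n a :: (nat \<Rightarrow> 'a::complex_inner_space) set)"
proof -
  define f where "f i = (\<lambda>x::nat\<Rightarrow>'a. if i < n then scaleC (a i) (scaleC (inverse (a 0)) (x 0)) else 0)" for i
  have "Qzeta n a = (\<Inter>i. {x::nat\<Rightarrow>'a. x i = f i x})"
    unfolding Q_alt[where a=a, OF n a0] f_def by auto
  moreover have "closed {x::nat\<Rightarrow>'a. x i = f i x}" for i
  proof (rule closed_Collect_eq)
    show "continuous_on UNIV (\<lambda>x::nat\<Rightarrow>'a. x i)" by simp
    show "continuous_on UNIV (f i)"
    proof (cases "i < n")
      case True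
      have "continuous_on UNIV (\<lambda>x::nat\<Rightarrow>'a. scaleC (a i) (scaleC (inverse (a 0)) (x 0)))"
        using continuous_on_compose2[OF cont_scaleC continuous_on_compose2[OF cont_scaleC continuous_on_product_coordinates]]
        by auto
      then show ?thesis using True unfolding f_def by simp
    next
      case False
      then show ?thesis unfolding f_def by simp
    qed
  qed
  ultimately show ?thesis by (simp add: closed_INT)
qed

lemma Ksub_Q:
  assumes n: "0 < n" and a0: "a 0 \<noteq> 0"
  shows "Ksub n (Qzeta n a :: (nat \<Rightarrow> 'a::complex_inner_space) set)"
proof -
  have s1: "Qzeta n a \<subseteq> (Kspace n :: (nat \<Rightarrow> 'a) set)"
  proof
    fix x :: "nat \<Rightarrow> 'a" assume "x \<in> Qzeta n a"
    then obtain h where h: "\<And>i. x i = (if i < n then scaleC (a i) h else 0)" unfolding Qzeta_def by blast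
    show "x \<in> Kspace n" unfolding Kspace_def using h by simp
  qed
  have s2: "(0::nat\<Rightarrow>'a) \<in> Qzeta n a" unfolding Qzeta_def
    by (rule CollectI, rule exI[of _ 0]) simp
  have s3: "(\<lambda>i. x i + y i) \<in> Qzeta n a" if x: "x \<in> Qzeta n a" and y: "y \<in> Qzeta n a" for x y :: "nat \<Rightarrow> 'a"
  proof -
    obtain h where h: "\<And>i. x i = (if i < n then scaleC (a i) h else 0)" using x unfolding Qzeta_def by auto
    obtain g where g: "\<And>i. y i = (if i < n then scaleC (a i) g else 0)" using y unfolding Qzeta_def by auto
    show ?thesis unfolding Qzeta_def
      by (rule CollectI, rule exI[of _ "h + g"]) (simp add: h g scaleC_add_right)
  qed
  have s4: "(\<lambda>i. scaleC c (x i)) \<in> Qzeta n a" if x: "x \<in> Qzeta n a" for c and x :: "nat \<Rightarrow> 'a"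
  proof -
    obtain h where h: "\<And>i. x i = (if i < n then scaleC (a i) h else 0)" using x unfolding Qzeta_def by auto
    have e: "scaleC c (scaleC (a i) h) = scaleC (a i) (scaleC c h)" for i
      by (simp add: scaleC_scaleC mult.commute)
    show ?thesis unfolding Qzeta_def
      by (rule CollectI, rule exI[of _ "scaleC c h"]) (simp add: h e)
  qed
  show ?thesis unfolding Ksub_def
    by (intro conjI s1 s2 closed_Q[where a=a, OF n a0] ballI allI s3 s4)
qed

definition emb :: "'a::complex_inner_space \<Rightarrow> nat \<Rightarrow> 'a" where
  "emb p = (\<lambda>i. if i = 0 then p else 0)"

lemma emb_E11: "emb p \<in> E11_tensor P \<longleftrightarrow> p \<in> P"
  unfolding emb_def E11_tensor_def by auto

lemma E11_emb: "x \<in> E11_tensor P \<Longrightarrow> x = emb (x 0)"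
  unfolding emb_def E11_tensor_def by auto

lemma pre_closed:
  assumes R: "Ksub n R"
  shows "closed_csubspace {p. emb p \<in> R}"
proof -
  have c: "continuous_on UNIV (emb :: 'a \<Rightarrow> nat \<Rightarrow> 'a)"
  proof (intro continuous_on_coordinatewise_then_product)
    fix i show "continuous_on UNIV (\<lambda>x::'a. emb x i)"
      by (cases "i = 0") (auto simp: emb_def intro: continuous_intros)
  qed
  have "closed (emb -` R)" using R unfolding Ksub_def by (intro closed_vimage c) auto
  moreover have "emb -` R = {p. emb p \<in> R}" by auto
  moreover have "emb 0 = 0" unfolding emb_def by auto
  moreover have e1: "emb (p + q) = (\<lambda>i. emb p i + emb q i)" for p q unfolding emb_def by auto
  moreover have e2: "emb (scaleC c p) = (\<lambda>i. scaleC c (emb p i))" for c p unfolding emb_def by auto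
  moreover have "\<forall>x\<in>{p. emb p \<in> R}. \<forall>y\<in>{p. emb p \<in> R}. x + y \<in> {p. emb p \<in> R}"
    using R unfolding Ksub_def by (simp add: e1)
  moreover have "\<forall>c. \<forall>x\<in>{p. emb p \<in> R}. scaleC c x \<in> {p. emb p \<in> R}"
    using R unfolding Ksub_def by (simp add: e2)
  ultimately show ?thesis using R unfolding closed_csubspace_def csubspace_def Ksub_def by auto
qed

lemma E11_join_le:
  assumes R: "Ksub n R" and T: "\<forall>P\<in>T. E11_tensor P \<subseteq> R"
  shows "E11_tensor (lat_join closed_csubspace T) \<subseteq> R"
proof
  fix x assume x: "x \<in> E11_tensor (lat_join closed_csubspace T)"
  have "\<Union>T \<subseteq> {p. emb p \<in> R}" using T emb_E11 by blast
  then have "lat_join closed_csubspace T \<subseteq> {p. emb p \<in> R}"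
    using pre_closed[OF R] unfolding lat_join_def by auto
  then show "x \<in> R" using x E11_emb[OF x] unfolding E11_tensor_def by auto
qed

lemma join_eq:
  assumes "\<And>T. Ksub n T \<Longrightarrow> (\<Union>S \<subseteq> T \<longleftrightarrow> \<Union>S' \<subseteq> T)"
  shows "lat_join (Ksub n) S = lat_join (Ksub n) S'"
proof -
  have "{T. Ksub n T \<and> \<Union>S \<subseteq> T} = {T. Ksub n T \<and> \<Union>S' \<subseteq> T}" using assms by blast
  then show ?thesis unfolding lat_join_def by simp
qed

lemma join_eq2:
  assumes "Ksub n J" "\<Union>S \<subseteq> J" "J \<in> S"
  shows "lat_join (Ksub n) S = J"
  using lat_join_least[OF assms(1,2)] lat_join_upper[OF assms(3)] by blast

lemma emb_notQ:
  assumes "p \<noteq> 0" "1 < n" "a 1 \<noteq> 0"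
  shows "emb p \<notin> Qzeta n (a::nat \<Rightarrow> complex)"
proof
  assume "emb p \<in> Qzeta n a"
  then obtain h where h: "\<And>i. emb p i = (if i < n then scaleC (a i) h else 0)" unfolding Qzeta_def by blast
  have "scaleC (a 1) h = 0" using h[of 1] assms(2) by (simp add: emb_def)
  then have "h = 0" using scaleC_eq0 assms(3) by blast
  then have "p = 0" using h[of 0] assms(2) by (simp add: emb_def)
  then show False using assms(1) by simp
qed

lemma E11_sub_Fk: "1 \<le> j \<Longrightarrow> E11_tensor P \<subseteq> Fk j"
  unfolding E11_tensor_def Fk_def by auto

lemma Fk_mono: "j \<le> k \<Longrightarrow> Fk j \<subseteq> Fk k"
  unfolding Fk_def by auto

lemma E11_mono: "P \<subseteq> P' \<Longrightarrow> E11_tensor P \<subseteq> E11_tensor P'"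
  unfolding E11_tensor_def by auto

lemma Fk1: "Fk 1 = E11_tensor UNIV"
  unfolding E11_tensor_def Fk_def by auto



theorem mainTheorem2:
  fixes \<L>0 :: "'a::chilbert_space set set"
    and n0 :: nat
    and a :: "nat \<Rightarrow> complex"
  assumes sep: "separable_space TYPE('a)"
    and lat: "subspace_lattice closed_csubspace UNIV \<L>0"
    and refl: "reflexive_lattice \<L>0"
    and n0: "2 \<le> n0"
    and unit: "(\<Sum>i<n0. (cmod (a i))\<^sup>2) = 1"
    and nz: "\<forall>i<n0. a i \<noteq> 0"
  shows "(\<forall>P\<in>\<L>0. P \<noteq> {0} \<longrightarrow>
            lat_pred (Ksub n0) (L_n0 n0 a \<L>0) (E11_tensor P) =
            lat_join (Ksub n0) {E11_tensor (lat_pred closed_csubspace \<L>0 P), Qzeta n0 a})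
       \<and> (\<forall>k. 1 < k \<and> k < n0 \<longrightarrow>
            lat_pred (Ksub n0) (L_n0 n0 a \<L>0) (Fk k) =
            lat_join (Ksub n0) {Fk (k - 1), Qzeta n0 a})
       \<and> lat_pred (Ksub n0) (L_n0 n0 a \<L>0) (Qzeta n0 a) = Fk (n0 - 1)
       \<and> lat_pred (Ksub n0) (L_n0 n0 a \<L>0) (Kspace n0) = Kspace n0
       \<and> lat_succ (Kspace n0) (L_n0 n0 a \<L>0) {0} = {0}"
proof -
  define L where "L = L_n0 n0 a \<L>0"
  define G :: "(nat \<Rightarrow> 'a) set set" where
    "G = {E11_tensor P | P. P \<in> \<L>0} \<union> {Qzeta n0 a} \<union> {Fk k | k. 2 \<le> k \<and> k \<le> n0}"
  have LG: "L = generated_lattice (Ksub n0) (Kspace n0) G" unfolding L_def G_def L_n0_def by simp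
  have a0: "a 0 \<noteq> 0" and a1: "a 1 \<noteq> 0" and an: "a (n0 - 1) \<noteq> 0" using nz n0 by auto
  have n0p: "0 < n0" "1 < n0" "1 \<le> n0 - 1" using n0 by auto
  have n1: "1 \<le> n0" using n0 by simp
  have L0c: "\<And>P. P \<in> \<L>0 \<Longrightarrow> closed_csubspace P" using lat unfolding subspace_lattice_def by auto
  have L0U: "UNIV \<in> \<L>0" using lat unfolding subspace_lattice_def by auto
  have L0j: "\<And>S. S \<subseteq> \<L>0 \<Longrightarrow> lat_join closed_csubspace S \<in> \<L>0" using lat unfolding subspace_lattice_def by auto
  have KQ: "Ksub n0 (Qzeta n0 a :: (nat \<Rightarrow> 'a) set)" using Ksub_Q[where a=a, OF n0p(1) a0] .
  have GK: "\<forall>g\<in>G. Ksub n0 g"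
  proof
    fix g assume "g \<in> G"
    moreover have "1 \<le> n0" using n0 by simp
    ultimately show "Ksub n0 g" unfolding G_def using L0c Ksub_E11 KQ Ksub_Fk by auto
  qed
  have dich: "Ksub n0 Q \<and> (A \<subseteq> Q \<or> Q \<subseteq> B)"
    if "Ksub n0 B" "A \<subseteq> Kspace n0" "\<forall>g\<in>G. A \<subseteq> g \<or> g \<subseteq> B" "Q \<in> L" for A B Q
    using gen_dich[of n0 B A G Q] that GK LG by auto
  have LK: "Ksub n0 Q" if "Q \<in> L" for Q
    using dich[of "{0}" "{}" Q] Ksub_zero that by auto
  have inE: "E11_tensor P \<in> L" if "P \<in> \<L>0" for P unfolding LG by (rule gen_in) (use that G_def in auto)
  have inQ: "Qzeta n0 a \<in> L" unfolding LG by (rule gen_in) (simp add: G_def)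
  have inF: "Fk k \<in> L" if "1 \<le> k" "k \<le> n0" for k
  proof (cases "k = 1")
    case True then show ?thesis by (subst True, subst Fk1) (rule inE[OF L0U])
  next
    case False then show ?thesis unfolding LG by (intro gen_in) (use that G_def in auto)
  qed
  show ?thesis
  proof (cases "\<exists>v::'a. v \<noteq> 0")
    case False
    then have all0: "\<And>v::'a. v = 0" by auto
    have sing: "X = {0}" if "0 \<in> X" for X :: "(nat \<Rightarrow> 'a) set"
      using that all0 by (auto simp: fun_eq_iff)
    have K0: "Ksub n0 X \<Longrightarrow> X = {0}" for X :: "(nat \<Rightarrow> 'a) set"
      using sing unfolding Ksub_def by auto
    have sub: "\<Union>S \<subseteq> Kspace n0" for S :: "(nat \<Rightarrow> 'a) set set"
      unfolding Kspace_def using all0 by auto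
    have J0: "lat_join (Ksub n0) S = {0}" for S :: "(nat \<Rightarrow> 'a) set set"
      using K0 lat_join_Ksub[OF sub] by blast
    have F0: "Fk j = ({0} :: (nat \<Rightarrow> 'a) set)" for j by (rule sing) (simp add: Fk_def)
    have Q0: "Qzeta n0 a = ({0} :: (nat \<Rightarrow> 'a) set)" using K0 KQ by blast
    have S0: "Kspace n0 = ({0} :: (nat \<Rightarrow> 'a) set)" using K0 Ksub_Kspace by blast
    have P0: "P \<in> \<L>0 \<Longrightarrow> P = {0}" for P
      using L0c[of P] all0 unfolding closed_csubspace_def csubspace_def by auto
    show ?thesis
      using P0 by (simp add: lat_pred_def lat_succ_def F0 Q0 S0 J0 L_def[symmetric])
  next
    case True
    then obtain v :: 'a where v: "v \<noteq> 0" by auto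
    define q where "q = (\<lambda>i. if i < n0 then scaleC (a i) v else 0)"
    have qQ: "q \<in> Qzeta n0 a" unfolding q_def Qzeta_def by blast
    have q0: "q 0 \<noteq> 0" and qn: "q (n0 - 1) \<noteq> 0"
      using scaleC_eq0 a0 an v n0p unfolding q_def by auto
    have embv: "emb v \<notin> Qzeta n0 a" using emb_notQ[where a=a, OF v n0p(2) a1] .
    have embF: "emb v \<in> Fk j" if "1 \<le> j" for j unfolding emb_def Fk_def using that by auto
    have embK: "emb v \<in> Kspace n0" using embF[of n0] n0p by (simp add: Fk_Kspace)
    have emb0: "emb v \<noteq> 0" using v unfolding emb_def by (auto simp: fun_eq_iff)
    define ev where "ev j = (\<lambda>i::nat. if i = j then v else (0::'a))" for j :: nat
    have evF: "ev j \<notin> Fk j" for j unfolding ev_def Fk_def using v by auto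
    have evF2: "ev j \<in> Fk k" if "j < k" for j k unfolding ev_def Fk_def using that by auto
    have p1: "lat_pred (Ksub n0) L (E11_tensor P) =
            lat_join (Ksub n0) {E11_tensor (lat_pred closed_csubspace \<L>0 P), Qzeta n0 a}"
      if P: "P \<in> \<L>0" "P \<noteq> {0}" for P
    proof -
      have "0 \<in> P" using L0c[OF P(1)] unfolding closed_csubspace_def csubspace_def by auto
      then obtain p where p: "p \<in> P" "p \<noteq> 0" using P(2) by blast
      have ep: "emb p \<in> E11_tensor P" using p emb_E11 by blast
      have "emb p \<noteq> 0" using p unfolding emb_def by (auto simp: fun_eq_iff)
      then have EP0: "E11_tensor P \<noteq> {0}" using ep by auto
      define Pm where "Pm = lat_join closed_csubspace {Q \<in> \<L>0. \<not> P \<subseteq> Q}"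
      have Pm: "lat_pred closed_csubspace \<L>0 P = Pm" unfolding lat_pred_def Pm_def using P by simp
      have PmL: "Pm \<in> \<L>0" unfolding Pm_def by (rule L0j) auto
      have KX: "Ksub n0 (E11_tensor Pm)" using Ksub_E11[OF L0c[OF PmL] n1] .
      have "lat_join (Ksub n0) {Q \<in> L. \<not> E11_tensor P \<subseteq> Q} = lat_join (Ksub n0) {E11_tensor Pm, Qzeta n0 a}"
      proof (rule join_eq)
        fix T :: "(nat \<Rightarrow> 'a) set" assume T: "Ksub n0 T"
        show "\<Union>{Q \<in> L. \<not> E11_tensor P \<subseteq> Q} \<subseteq> T \<longleftrightarrow> \<Union>{E11_tensor Pm, Qzeta n0 a} \<subseteq> T"
        proof
          assume H: "\<Union>{Q \<in> L. \<not> E11_tensor P \<subseteq> Q} \<subseteq> T"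
          have "\<not> E11_tensor P \<subseteq> Qzeta n0 a" using ep emb_notQ[where a=a, OF p(2) n0p(2) a1] by blast
          then have "Qzeta n0 a \<subseteq> T" using H inQ by blast
          moreover have "E11_tensor Pm \<subseteq> T" unfolding Pm_def
          proof (rule E11_join_le[OF T], intro ballI)
            fix P' assume P': "P' \<in> {Q \<in> \<L>0. \<not> P \<subseteq> Q}"
            have "\<not> E11_tensor P \<subseteq> E11_tensor P'" using P' emb_E11 by blast
            then show "E11_tensor P' \<subseteq> T" using H inE P' by blast
          qed
          ultimately show "\<Union>{E11_tensor Pm, Qzeta n0 a} \<subseteq> T" by auto
        next
          assume H: "\<Union>{E11_tensor Pm, Qzeta n0 a} \<subseteq> T"
          define B where "B = lat_join (Ksub n0) {E11_tensor Pm, Qzeta n0 a}"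
          have KB: "Ksub n0 B" unfolding B_def
            by (rule lat_join_Ksub) (use Ksub_sub[OF KX] Ksub_sub[OF KQ] in auto)
          have BT: "B \<subseteq> T" unfolding B_def by (rule lat_join_least[OF T H])
          have XB: "E11_tensor Pm \<subseteq> B" and QB: "Qzeta n0 a \<subseteq> B"
            unfolding B_def by (simp_all add: lat_join_upper)
          have AK: "E11_tensor P \<subseteq> Kspace n0" using Ksub_sub[OF Ksub_E11[OF L0c[OF P(1)] n1]] .
          have gen: "\<forall>g\<in>G. E11_tensor P \<subseteq> g \<or> g \<subseteq> B"
          proof
            fix g assume "g \<in> G"
            then consider (E) P' where "g = E11_tensor P'" "P' \<in> \<L>0" | (Q) "g = Qzeta n0 a"
              | (F) k where "g = Fk k" "2 \<le> k" unfolding G_def by auto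
            then show "E11_tensor P \<subseteq> g \<or> g \<subseteq> B"
            proof cases
              case E
              show ?thesis
              proof (cases "P \<subseteq> P'")
                case True then show ?thesis using E E11_mono by blast
              next
                case False
                then have "P' \<subseteq> Pm" unfolding Pm_def using E by (intro lat_join_upper) auto
                then show ?thesis using E E11_mono XB by blast
              qed
            next
              case Q then show ?thesis using QB by blast
            next
              case F then show ?thesis using E11_sub_Fk[of k P] by auto
            qed
          qed
          show "\<Union>{Q \<in> L. \<not> E11_tensor P \<subseteq> Q} \<subseteq> T"
            using dich[OF KB AK gen] BT by blast
        qed
      qed
      then show ?thesis using EP0 Pm unfolding lat_pred_def by simp
    qed
    have p2: "lat_pred (Ksub n0) L (Fk k) = lat_join (Ksub n0) {Fk (k - 1), Qzeta n0 a}"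
      if k: "1 < k" "k < n0" for k
    proof -
      have F0: "Fk k \<noteq> ({0}::(nat \<Rightarrow> 'a) set)"
      proof
        assume "Fk k = ({0}::(nat \<Rightarrow> 'a) set)"
        moreover have "emb v \<in> Fk k" using embF k by simp
        ultimately show False using emb0 by simp
      qed
      have KX: "Ksub n0 (Fk (k - 1) :: (nat \<Rightarrow> 'a) set)" by (rule Ksub_Fk) (use k in simp)
      have "lat_join (Ksub n0) {Q \<in> L. \<not> Fk k \<subseteq> Q} = lat_join (Ksub n0) {Fk (k - 1), Qzeta n0 a}"
      proof (rule join_eq)
        fix T :: "(nat \<Rightarrow> 'a) set" assume T: "Ksub n0 T"
        show "\<Union>{Q \<in> L. \<not> Fk k \<subseteq> Q} \<subseteq> T \<longleftrightarrow> \<Union>{Fk (k - 1), Qzeta n0 a} \<subseteq> T"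
        proof
          assume H: "\<Union>{Q \<in> L. \<not> Fk k \<subseteq> Q} \<subseteq> T"
          have k1: "1 \<le> k" "k - 1 < k" "1 \<le> k - 1" "k - 1 \<le> n0" using k by auto
          have "\<not> (Fk k :: (nat \<Rightarrow> 'a) set) \<subseteq> Qzeta n0 a" using embF[OF k1(1)] embv by blast
          then have "Qzeta n0 a \<subseteq> T" using H inQ by blast
          moreover have "Fk (k - 1) \<subseteq> T"
          proof -
            have "\<not> (Fk k :: (nat \<Rightarrow> 'a) set) \<subseteq> Fk (k - 1)" using evF[of "k - 1"] evF2[OF k1(2)] by blast
            moreover have "Fk (k - 1) \<in> L" using inF[OF k1(3,4)] .
            ultimately show ?thesis using H by blast
          qed
          ultimately show "\<Union>{Fk (k - 1), Qzeta n0 a} \<subseteq> T" by auto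
        next
          assume H: "\<Union>{Fk (k - 1), Qzeta n0 a} \<subseteq> T"
          define B where "B = lat_join (Ksub n0) {Fk (k - 1) :: (nat \<Rightarrow> 'a) set, Qzeta n0 a}"
          have KB: "Ksub n0 B" unfolding B_def
            by (rule lat_join_Ksub) (use Ksub_sub[OF KX] Ksub_sub[OF KQ] in auto)
          have BT: "B \<subseteq> T" unfolding B_def by (rule lat_join_least[OF T H])
          have XB: "Fk (k - 1) \<subseteq> B" and QB: "Qzeta n0 a \<subseteq> B"
            unfolding B_def by (simp_all add: lat_join_upper)
          have AK: "(Fk k :: (nat \<Rightarrow> 'a) set) \<subseteq> Kspace n0" using k unfolding Fk_def Kspace_def by auto
          have gen: "\<forall>g\<in>G. Fk k \<subseteq> g \<or> g \<subseteq> B"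
          proof
            fix g assume "g \<in> G"
            then consider (E) P' where "g = E11_tensor P'" "P' \<in> \<L>0" | (Q) "g = Qzeta n0 a"
              | (F) j where "g = Fk j" "2 \<le> j" unfolding G_def by auto
            then show "Fk k \<subseteq> g \<or> g \<subseteq> B"
            proof cases
              case E
              have "1 \<le> k - 1" using k by simp
              then show ?thesis using E E11_sub_Fk[of "k - 1" P'] XB by blast
            next
              case Q then show ?thesis using QB by blast
            next
              case F
              show ?thesis
              proof (cases "k \<le> j")
                case True then have "(Fk k :: (nat \<Rightarrow> 'a) set) \<subseteq> Fk j" by (rule Fk_mono)
                then show ?thesis unfolding F(1) by blast
              next
                case False then have "j \<le> k - 1" by simp
                then have "(Fk j :: (nat \<Rightarrow> 'a) set) \<subseteq> Fk (k - 1)" by (rule Fk_mono)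
                then show ?thesis unfolding F(1) using XB by blast
              qed
            qed
          qed
          show "\<Union>{Q \<in> L. \<not> Fk k \<subseteq> Q} \<subseteq> T"
            using dich[OF KB AK gen] BT by blast
        qed
      qed
      then show ?thesis using F0 unfolding lat_pred_def by simp
    qed
    have p3: "lat_pred (Ksub n0) L (Qzeta n0 a) = Fk (n0 - 1)"
    proof -
      have Q0: "Qzeta n0 a \<noteq> ({0}::(nat \<Rightarrow> 'a) set)"
      proof
        assume "Qzeta n0 a = ({0}::(nat \<Rightarrow> 'a) set)"
        then have "q = 0" using qQ by simp
        then have "q 0 = 0" by (simp add: zero_fun_def)
        then show False using q0 by simp
      qed
      have KB: "Ksub n0 (Fk (n0 - 1) :: (nat \<Rightarrow> 'a) set)" by (rule Ksub_Fk) simp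
      have AK: "(Qzeta n0 a :: (nat \<Rightarrow> 'a) set) \<subseteq> Kspace n0" using Ksub_sub[OF KQ] .
      have gen: "\<forall>g\<in>G. Qzeta n0 a \<subseteq> g \<or> g \<subseteq> Fk (n0 - 1)"
      proof
        fix g assume "g \<in> G"
        then consider (E) P' where "g = E11_tensor P'" "P' \<in> \<L>0" | (Q) "g = Qzeta n0 a"
          | (F) j where "g = Fk j" "j \<le> n0" unfolding G_def by auto
        then show "Qzeta n0 a \<subseteq> g \<or> g \<subseteq> Fk (n0 - 1)"
        proof cases
          case E
          then show ?thesis using E11_sub_Fk[of "n0 - 1" P'] n0p by auto
        next
          case Q then show ?thesis by blast
        next
          case F
          show ?thesis
          proof (cases "j = n0")
            case True then show ?thesis using F AK by (simp add: Fk_Kspace)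
          next
            case False then have "j \<le> n0 - 1" using F by simp
            then have "(Fk j :: (nat \<Rightarrow> 'a) set) \<subseteq> Fk (n0 - 1)" by (rule Fk_mono)
            then show ?thesis unfolding F(1) by blast
          qed
        qed
      qed
      have "q \<notin> Fk (n0 - 1)" using qn unfolding Fk_def by blast
      then have "\<not> (Qzeta n0 a :: (nat \<Rightarrow> 'a) set) \<subseteq> Fk (n0 - 1)" using qQ by blast
      moreover have "Fk (n0 - 1) \<in> L" using inF[OF n0p(3)] by simp
      ultimately have mem: "Fk (n0 - 1) \<in> {Q \<in> L. \<not> Qzeta n0 a \<subseteq> Q}" by simp
      have U: "\<Union>{Q \<in> L. \<not> Qzeta n0 a \<subseteq> Q} \<subseteq> Fk (n0 - 1)"
      proof
        fix x assume "x \<in> \<Union>{Q \<in> L. \<not> Qzeta n0 a \<subseteq> Q}"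
        then obtain Q where Q0': "Q \<in> {Q \<in> L. \<not> Qzeta n0 a \<subseteq> Q}" and Q3: "x \<in> Q" by (rule UnionE)
        then have Q: "Q \<in> L" "\<not> Qzeta n0 a \<subseteq> Q" "x \<in> Q" by simp_all
        have "Q \<subseteq> Fk (n0 - 1)" using dich[OF KB AK gen Q(1)] Q(2) by simp
        then show "x \<in> Fk (n0 - 1)" using Q(3) by (rule subsetD)
      qed
      have J: "lat_join (Ksub n0) {Q \<in> L. \<not> Qzeta n0 a \<subseteq> Q} = Fk (n0 - 1)"
        by (rule join_eq2[OF KB U mem])
      show ?thesis unfolding lat_pred_def using Q0 J by simp
    qed
    have p4: "lat_pred (Ksub n0) L (Kspace n0) = Kspace n0"
    proof -
      have K0: "Kspace n0 \<noteq> ({0} :: (nat \<Rightarrow> 'a) set)" using embK emb0 by auto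
      define S where "S = {Q \<in> L. \<not> Kspace n0 \<subseteq> Q}"
      have US: "\<Union>S \<subseteq> Kspace n0" unfolding S_def using LK Ksub_sub by blast
      define J where "J = lat_join (Ksub n0) S"
      have KJ: "Ksub n0 J" unfolding J_def using lat_join_Ksub[OF US] .
      have "n0 - 1 < n0" using n0p by simp
      then have "ev (n0 - 1) \<in> Kspace n0" using evF2 by (simp add: Fk_Kspace[symmetric])
      then have "\<not> (Kspace n0 :: (nat \<Rightarrow> 'a) set) \<subseteq> Fk (n0 - 1)" using evF[of "n0 - 1"] by auto
      moreover have "Fk (n0 - 1) \<in> L" using inF[OF n0p(3)] by simp
      ultimately have FJ: "Fk (n0 - 1) \<subseteq> J" unfolding J_def S_def
        by (intro lat_join_upper) blast
      have "\<not> (Kspace n0 :: (nat \<Rightarrow> 'a) set) \<subseteq> Qzeta n0 a" using embK embv by blast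
      then have QJ: "Qzeta n0 a \<subseteq> J" unfolding J_def S_def using inQ
        by (intro lat_join_upper) blast
      have "Kspace n0 \<subseteq> J"
      proof
        fix x :: "nat \<Rightarrow> 'a" assume x: "x \<in> Kspace n0"
        define h where "h = scaleC (inverse (a (n0 - 1))) (x (n0 - 1))"
        define z where "z = (\<lambda>i. if i < n0 then scaleC (a i) h else 0)"
        have zQ: "z \<in> Qzeta n0 a" unfolding z_def Qzeta_def by blast
        have zn: "z (n0 - 1) = x (n0 - 1)" unfolding z_def h_def using n0p an
          by (simp add: scaleC_scaleC scaleC_one)
        define y where "y = (\<lambda>i. x i - z i)"
        have yF: "y \<in> Fk (n0 - 1)" unfolding Fk_def
        proof (intro CollectI allI impI)
          fix i assume i: "n0 - 1 \<le> i"
          show "y i = 0"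
          proof (cases "i = n0 - 1")
            case True then show ?thesis unfolding y_def using zn by simp
          next
            case False then have "n0 \<le> i" using i by auto
            then show ?thesis using x unfolding y_def z_def Kspace_def by simp
          qed
        qed
        have "y \<in> J" "z \<in> J" using FJ QJ yF zQ by auto
        then have "(\<lambda>i. y i + z i) \<in> J" using KJ unfolding Ksub_def by simp
        moreover have "(\<lambda>i. y i + z i) = x" unfolding y_def by simp
        ultimately show "x \<in> J" by simp
      qed
      moreover have "J \<subseteq> Kspace n0" unfolding J_def by (rule lat_join_least[OF Ksub_Kspace US])
      ultimately show ?thesis using K0 unfolding lat_pred_def J_def S_def by simp
    qed
    have p5: "lat_succ (Kspace n0) L {0} = {0}"
    proof -
      have K0: "{0} \<noteq> (Kspace n0 :: (nat \<Rightarrow> 'a) set)" using embK emb0 by auto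
      have m1: "Qzeta n0 a \<in> {Q \<in> L. \<not> Q \<subseteq> {0}}" using inQ qQ q0 by auto
      have m2: "Fk (n0 - 1) \<in> {Q \<in> L. \<not> Q \<subseteq> {0}}" using inF[of "n0 - 1"] n0p embF[of "n0 - 1"] emb0 by auto
      have "Kspace n0 \<inter> \<Inter>{Q \<in> L. \<not> Q \<subseteq> {0}} \<subseteq> {0}"
      proof
        fix x assume "x \<in> Kspace n0 \<inter> \<Inter>{Q \<in> L. \<not> Q \<subseteq> {0}}"
        then have xQ: "x \<in> Qzeta n0 a" and xF: "x \<in> Fk (n0 - 1)" using m1 m2 by auto
        obtain h where h: "\<And>i. x i = (if i < n0 then scaleC (a i) h else 0)" using xQ unfolding Qzeta_def by blast
        have "scaleC (a (n0 - 1)) h = 0" using h[of "n0 - 1"] xF n0p unfolding Fk_def by auto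
        then have "h = 0" using scaleC_eq0 an by blast
        then show "x \<in> {0}" using h by (auto simp: fun_eq_iff)
      qed
      moreover have "0 \<in> Kspace n0 \<inter> \<Inter>{Q \<in> L. \<not> Q \<subseteq> {0}}"
        using LK Ksub_Kspace[of n0] unfolding Ksub_def by auto
      ultimately show ?thesis using K0 unfolding lat_succ_def lat_meet_def by auto
    qed
    show ?thesis unfolding L_def[symmetric] by (simp add: p1 p2 p3 p4 p5)
  qed
qed

end
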